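(* Let $\mathbf{x}\in\mathbb{R}^{3n}$ be a pose whose points are not all collinear, and let $F:\mathbb{R}\times\mathbb{R}^{3n}\to\mathbb{R}^{3n}$ be any map with $F(0,\mathbf{x})=\mathbf{x}$ and $t\mapsto F(t,\mathbf{x})$ differentiable at $t=0$. Define $\mathbf{x}(t):=\mathrm{RMSDAlign}(\mathbf{x},F(t,\mathbf{x}))$ and assume $\mathbf{x}(0)=\mathbf{x}$ and that the aligning rotation and translation are differentiable at $t=0$. Then $\frac{d}{dt}\frac1n\sum_i\mathbf{x}_i(t)\big|_{t=0}=0$ and $\sum_i(\mathbf{x}_i-\bar{\mathbf{x}})\times\frac{d}{dt}\mathbf{x}_i(t)\big|_{t=0}=0$, where $\bar{\mathbf{x}}=\frac1n\sum_i\mathbf{x}_i$.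
   Context: $\mathrm{RMSD}(\mathbf{x},\mathbf{x}')=\big(\frac1n\sum_i\|\mathbf{x}_i-\mathbf{x}'_i\|^2\big)^{1/2}$ for $\mathbf{x},\mathbf{x}'\in\mathbb{R}^{3n}$ (viewed as $n$ points in $\mathbb{R}^3$). $\mathrm{RMSDAlign}(\mathbf{x},\mathbf{x}')=\operatorname{argmin}_{\mathbf{x}^\dagger\in\{g\mathbf{x}'\mid g\in SE(3)\}}\mathrm{RMSD}(\mathbf{x},\mathbf{x}^\dagger)$, where $SE(3)$ acts on each point. *)

theory Defs
  imports "HOL-Analysis.Analysis"
begin

text \<open>A pose of n points in R^3 is an element of real^3^'n (point i is x$i, n = CARD('n)).
  SE(3) acts pointwise: g = (Q, b) with Q a rotation matrix, point p goes to Q p + b.\<close>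

definition se3_act :: "real^3^3 \<Rightarrow> real^3 \<Rightarrow> real^3^'n \<Rightarrow> real^3^'n" where
  "se3_act Q b y = (\<chi> i. Q *v (y $ i) + b)"

definition RMSD :: "real^3^'n::finite \<Rightarrow> real^3^'n \<Rightarrow> real" where
  "RMSD x x' = sqrt ((1 / real CARD('n)) * (\<Sum>i\<in>UNIV. (norm (x $ i - x' $ i))\<^sup>2))"

definition se3_orbit :: "real^3^'n \<Rightarrow> (real^3^'n) set" where
  "se3_orbit y = {se3_act Q b y | Q b. rotation_matrix Q}"

definition is_RMSDAlign :: "real^3^'n::finite \<Rightarrow> real^3^'n \<Rightarrow> real^3^'n \<Rightarrow> bool" where
  "is_RMSDAlign x x' z \<longleftrightarrow> z \<in> se3_orbit x' \<and> (\<forall>w\<in>se3_orbit x'. RMSD x z \<le> RMSD x w)"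

definition centroid :: "real^3^'n::finite \<Rightarrow> real^3" where
  "centroid y = (1 / real CARD('n)) *\<^sub>R (\<Sum>i\<in>UNIV. y $ i)"

end

theory Submission
  imports Defs
begin


lemma cs_lemma:
  fixes A B :: real
  assumes "\<And>c s. c\<^sup>2 + s\<^sup>2 = 1 \<Longrightarrow> c*A + s*B \<le> A"
  shows "B = 0"
proof (rule ccontr)
  assume B: "B \<noteq> 0"
  define r where "r = sqrt (A\<^sup>2 + B\<^sup>2)"
  have r2: "r\<^sup>2 = A\<^sup>2 + B\<^sup>2" unfolding r_def by simp
  have rpos: "r > 0" unfolding r_def using B by (simp add: sum_power2_gt_zero_iff)
  have "(A/r)\<^sup>2 + (B/r)\<^sup>2 = 1" using r2 rpos B by (simp add: power_divide add_divide_distrib[symmetric])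
  from assms[OF this] have "(A/r)*A + (B/r)*B \<le> A" .
  hence "(A\<^sup>2 + B\<^sup>2)/r \<le> A" by (simp add: power2_eq_square add_divide_distrib)
  moreover have "(A\<^sup>2 + B\<^sup>2)/r = r" using r2 rpos by (metis nonzero_mult_div_cancel_left order_less_irrefl power2_eq_square)
  ultimately have "r \<le> A" by simp
  hence "r\<^sup>2 \<le> A\<^sup>2" using rpos by (simp add: power_mono)
  thus False using r2 B by simp
qed

definition Rz :: "real \<Rightarrow> real \<Rightarrow> real^3^3" where
  "Rz c s = vector [vector [c,-s,0], vector [s,c,0], vector [0,0,1]]"
definition Rx :: "real \<Rightarrow> real \<Rightarrow> real^3^3" where
  "Rx c s = vector [vector [1,0,0], vector [0,c,-s], vector [0,s,c]]"
definition Ry :: "real \<Rightarrow> real \<Rightarrow> real^3^3" where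
  "Ry c s = vector [vector [c,0,s], vector [0,1,0], vector [-s,0,c]]"

lemma rot_Rz: "c\<^sup>2 + s\<^sup>2 = 1 \<Longrightarrow> rotation_matrix (Rz c s)"
  unfolding rotation_matrix_def orthogonal_matrix_def Rz_def
  by (simp add: det_3 vec_eq_iff forall_3 matrix_matrix_mult_def transpose_def sum_3 mat_def vector_def power2_eq_square algebra_simps)
lemma rot_Rx: "c\<^sup>2 + s\<^sup>2 = 1 \<Longrightarrow> rotation_matrix (Rx c s)"
  unfolding rotation_matrix_def orthogonal_matrix_def Rx_def
  by (simp add: det_3 vec_eq_iff forall_3 matrix_matrix_mult_def transpose_def sum_3 mat_def vector_def power2_eq_square algebra_simps)
lemma rot_Ry: "c\<^sup>2 + s\<^sup>2 = 1 \<Longrightarrow> rotation_matrix (Ry c s)"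
  unfolding rotation_matrix_def orthogonal_matrix_def Ry_def
  by (simp add: det_3 vec_eq_iff forall_3 matrix_matrix_mult_def transpose_def sum_3 mat_def vector_def power2_eq_square algebra_simps)

lemma in_Rz: "u \<bullet> (Rz c s *v v) = c * (u$1* v$1 + u$2* v$2) + s * (cross3 v u $ 3) + u$3* v$3"
  unfolding Rz_def by (simp add: cross3_def inner_vec_def sum_3 matrix_vector_mult_def vector_def ring_distribs)
lemma in_Rx: "u \<bullet> (Rx c s *v v) = c * (u$2* v$2 + u$3* v$3) + s * (cross3 v u $ 1) + u$1* v$1"
  unfolding Rx_def by (simp add: cross3_def inner_vec_def sum_3 matrix_vector_mult_def vector_def ring_distribs)
lemma in_Ry: "u \<bullet> (Ry c s *v v) = c * (u$1* v$1 + u$3* v$3) + s * (cross3 v u $ 2) + u$2* v$2"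
  unfolding Ry_def by (simp add: cross3_def inner_vec_def sum_3 matrix_vector_mult_def vector_def ring_distribs)

lemma in_id: "(u::real^3) \<bullet> v = u$1* v$1 + u$2* v$2 + u$3* v$3"
  by (simp add: inner_vec_def sum_3)

lemma rot_norm: "rotation_matrix (R::real^'n^'n) \<Longrightarrow> norm (R *v v) = norm v"
proof -
  assume "rotation_matrix R"
  hence "orthogonal_matrix R" by (simp add: rotation_matrix_def)
  hence "orthogonal_transformation (\<lambda>w. R *v w)"
    by (simp add: orthogonal_transformation_matrix)
  thus ?thesis by (simp add: orthogonal_transformation_norm)
qed

lemma norm_diff_sq': "(norm (u - v))\<^sup>2 = (norm u)\<^sup>2 - 2 * (u \<bullet> v) + (norm (v::'a::real_inner))\<^sup>2"
  by (simp add: power2_norm_eq_inner inner_diff_left inner_diff_right inner_commute)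

lemma rot_id: "rotation_matrix (mat 1 :: real^'n^'n)"
  by (simp add: rotation_matrix_def orthogonal_matrix_id det_I)

lemma opt_transl:
  fixes x y :: "real^3^'n::finite"
  assumes H: "\<And>c. (\<Sum>i\<in>UNIV. (norm (x$i - y$i))\<^sup>2) \<le> (\<Sum>i\<in>UNIV. (norm (x$i - (y$i + c)))\<^sup>2)"
  shows "(\<Sum>i\<in>UNIV. x$i - y$i) = 0"
proof -
  define D where "D = (\<Sum>i\<in>UNIV. x$i - y$i)"
  define N where "N = real CARD('n)"
  have N: "N > 0" unfolding N_def by simp
  define c where "c = (1/N) *\<^sub>R D"
  have eq: "x$i - (y$i + c) = (x$i - y$i) - c" for i by simp
  have "(\<Sum>i\<in>UNIV. (norm (x$i - (y$i + c)))\<^sup>2)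
      = (\<Sum>i\<in>UNIV. (norm (x$i - y$i))\<^sup>2 - 2 * ((x$i - y$i) \<bullet> c) + (norm c)\<^sup>2)"
    unfolding eq norm_diff_sq' by simp
  also have "\<dots> = (\<Sum>i\<in>UNIV. (norm (x$i - y$i))\<^sup>2) - 2 * (D \<bullet> c) + N * (norm c)\<^sup>2"
    by (simp add: sum.distrib sum_subtractf sum_distrib_left[symmetric] inner_sum_left inner_diff_left D_def N_def)
  also have "\<dots> = (\<Sum>i\<in>UNIV. (norm (x$i - y$i))\<^sup>2) - (norm D)\<^sup>2 / N"
    using N power2_norm_eq_inner[of D] by (simp add: c_def power2_eq_square field_simps)
  finally have "(norm D)\<^sup>2 / N \<le> 0" using H[of c] by simp
  hence "(norm D)\<^sup>2 \<le> 0" using N by (simp add: divide_le_0_iff)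
  thus ?thesis unfolding D_def[symmetric] by simp
qed

lemma opt_rot:
  fixes x y :: "real^3^'n::finite"
  assumes H: "\<And>R. rotation_matrix R \<Longrightarrow> (\<Sum>i\<in>UNIV. (norm (x$i - y$i))\<^sup>2) \<le> (\<Sum>i\<in>UNIV. (norm (x$i - R *v (y$i)))\<^sup>2)"
  shows "(\<Sum>i\<in>UNIV. cross3 (y$i) (x$i)) = 0"
proof -
  have I: "(\<Sum>i\<in>UNIV. x$i \<bullet> (R *v y$i)) \<le> (\<Sum>i\<in>UNIV. x$i \<bullet> y$i)" if R: "rotation_matrix R" for R
  proof -
    have "(\<Sum>i\<in>UNIV. (norm (x$i - y$i))\<^sup>2) \<le> (\<Sum>i\<in>UNIV. (norm (x$i - R *v (y$i)))\<^sup>2)"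
      using H[OF R] .
    thus ?thesis unfolding norm_diff_sq' rot_norm[OF R]
      by (simp add: sum.distrib sum_subtractf sum_distrib_left[symmetric])
  qed
  define S where "S = (\<Sum>i\<in>UNIV. cross3 (y$i) (x$i))"
  have S: "S $ k = (\<Sum>i\<in>UNIV. cross3 (y$i) (x$i) $ k)" for k unfolding S_def by (simp add: sum_component)
  have "S $ 3 = 0"
  proof (rule cs_lemma)
    fix c s :: real assume "c\<^sup>2 + s\<^sup>2 = 1"
    from I[OF rot_Rz[OF this]] have "(\<Sum>i\<in>UNIV. c * (x$i$1*y$i$1 + x$i$2*y$i$2) + s * (cross3 (y$i) (x$i) $ 3) + x$i$3*y$i$3) \<le> (\<Sum>i\<in>UNIV. x$i \<bullet> y$i)"
      by (simp only: in_Rz)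
    thus "c * (\<Sum>i\<in>UNIV. x$i$1*y$i$1 + x$i$2*y$i$2) + s * S$3 \<le> (\<Sum>i\<in>UNIV. x$i$1*y$i$1 + x$i$2*y$i$2)"
      unfolding in_id S by (simp add: sum.distrib sum_distrib_left[symmetric])
  qed
  moreover have "S $ 1 = 0"
  proof (rule cs_lemma)
    fix c s :: real assume "c\<^sup>2 + s\<^sup>2 = 1"
    from I[OF rot_Rx[OF this]] have "(\<Sum>i\<in>UNIV. c * (x$i$2*y$i$2 + x$i$3*y$i$3) + s * (cross3 (y$i) (x$i) $ 1) + x$i$1*y$i$1) \<le> (\<Sum>i\<in>UNIV. x$i \<bullet> y$i)"
      by (simp only: in_Rx)
    thus "c * (\<Sum>i\<in>UNIV. x$i$2*y$i$2 + x$i$3*y$i$3) + s * S$1 \<le> (\<Sum>i\<in>UNIV. x$i$2*y$i$2 + x$i$3*y$i$3)"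
      unfolding in_id S by (simp add: sum.distrib sum_distrib_left[symmetric])
  qed
  moreover have "S $ 2 = 0"
  proof (rule cs_lemma)
    fix c s :: real assume "c\<^sup>2 + s\<^sup>2 = 1"
    from I[OF rot_Ry[OF this]] have "(\<Sum>i\<in>UNIV. c * (x$i$1*y$i$1 + x$i$3*y$i$3) + s * (cross3 (y$i) (x$i) $ 2) + x$i$2*y$i$2) \<le> (\<Sum>i\<in>UNIV. x$i \<bullet> y$i)"
      by (simp only: in_Ry)
    thus "c * (\<Sum>i\<in>UNIV. x$i$1*y$i$1 + x$i$3*y$i$3) + s * S$2 \<le> (\<Sum>i\<in>UNIV. x$i$1*y$i$1 + x$i$3*y$i$3)"
      unfolding in_id S by (simp add: sum.distrib sum_distrib_left[symmetric])
  qed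
  ultimately have "S = 0" by (simp add: vec_eq_iff forall_3)
  thus ?thesis unfolding S_def .
qed


lemma bb_mv: "bounded_bilinear (\<lambda>(A::real^3^3) (v::real^3). A *v v)"
proof -
  have "bilinear (\<lambda>(A::real^3^3) (v::real^3). A *v v)"
    unfolding bilinear_def
    by (auto simp: linear_iff matrix_vector_mult_add_rdistrib matrix_vector_right_distrib
        matrix_vector_mult_scaleR scaleR_matrix_vector_assoc)
  thus ?thesis by (simp add: bilinear_conv_bounded_bilinear)
qed

lemma bb_cross: "bounded_bilinear cross3"
  using bilinear_cross by (simp add: bilinear_conv_bounded_bilinear)

lemma se3_nth: "se3_act Q b y $ i = Q *v (y $ i) + b"
  by (simp add: se3_act_def)

lemma rot_mul: "rotation_matrix A \<Longrightarrow> rotation_matrix B \<Longrightarrow> rotation_matrix (A ** (B::real^3^3))"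
  by (simp add: rotation_matrix_def orthogonal_matrix_mul det_mul)

theorem mainTheorem2:
  fixes x :: "real^3^'n::finite"
    and F :: "real \<Rightarrow> real^3^'n \<Rightarrow> real^3^'n"
    and Q :: "real \<Rightarrow> real^3^3"
    and b :: "real \<Rightarrow> real^3"
  assumes noncoll: "\<not> collinear (range (\<lambda>i. x $ i))"
    and F0: "F 0 x = x"
    and Fdiff: "(\<lambda>t. F t x) differentiable (at 0)"
    and rot: "\<forall>t. rotation_matrix (Q t)"
    and align: "\<forall>t. is_RMSDAlign x (F t x) (se3_act (Q t) (b t) (F t x))"
    and align0: "se3_act (Q 0) (b 0) (F 0 x) = x"
    and Qdiff: "Q differentiable (at 0)"
    and bdiff: "b differentiable (at 0)"
  shows "((\<lambda>t. centroid (se3_act (Q t) (b t) (F t x))) has_vector_derivative 0) (at 0)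
    \<and> (\<Sum>i\<in>UNIV. cross3 (x $ i - centroid x)
          (vector_derivative (\<lambda>t. se3_act (Q t) (b t) (F t x) $ i) (at 0))) = 0"
proof -
  define y where "y t = se3_act (Q t) (b t) (F t x)" for t
  define N where "N = real CARD('n)"
  have N: "N > 0" unfolding N_def by simp
  have H: "(\<Sum>i\<in>UNIV. (norm (x$i - y t$i))\<^sup>2) \<le> (\<Sum>i\<in>UNIV. (norm (x$i - (R *v (y t$i) + c)))\<^sup>2)"
    if R: "rotation_matrix R" for t R c
  proof -
    have "se3_act R c (y t) = se3_act (R ** Q t) (R *v b t + c) (F t x)"
      unfolding y_def se3_act_def
      by (simp add: vec_eq_iff matrix_vector_mul_assoc[symmetric] matrix_vector_right_distrib)
    moreover have "rotation_matrix (R ** Q t)" using rot_mul[OF R] rot by simp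
    ultimately have "se3_act R c (y t) \<in> se3_orbit (F t x)" unfolding se3_orbit_def by blast
    with align have "RMSD x (y t) \<le> RMSD x (se3_act R c (y t))"
      unfolding is_RMSDAlign_def y_def by blast
    hence "(1/N) * (\<Sum>i\<in>UNIV. (norm (x$i - y t$i))\<^sup>2) \<le> (1/N) * (\<Sum>i\<in>UNIV. (norm (x$i - se3_act R c (y t) $ i))\<^sup>2)"
      unfolding RMSD_def N_def by simp
    hence "(\<Sum>i\<in>UNIV. (norm (x$i - y t$i))\<^sup>2) \<le> (\<Sum>i\<in>UNIV. (norm (x$i - se3_act R c (y t) $ i))\<^sup>2)"
      using N by (simp add: divide_le_cancel)
    thus ?thesis by (simp add: se3_nth)
  qed
  have sumeq: "(\<Sum>i\<in>UNIV. y t $ i) = (\<Sum>i\<in>UNIV. x $ i)" for t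
  proof -
    have "(\<Sum>i\<in>UNIV. x$i - y t$i) = 0"
      by (rule opt_transl) (use H[OF rot_id, of t] in simp)
    thus ?thesis by (simp add: sum_subtractf)
  qed
  have crosseq: "(\<Sum>i\<in>UNIV. cross3 (y t$i) (x$i)) = 0" for t
    by (rule opt_rot) (use H[of _ t 0] in simp)
  have part1: "((\<lambda>t. centroid (y t)) has_vector_derivative 0) (at 0)"
  proof -
    have "(\<lambda>t. centroid (y t)) = (\<lambda>t. centroid x)"
      by (simp add: centroid_def sumeq)
    thus ?thesis by simp
  qed
  obtain Qd where Qd: "(Q has_vector_derivative Qd) (at 0)"
    using Qdiff vector_derivative_works by blast
  obtain bd where bd: "(b has_vector_derivative bd) (at 0)"
    using bdiff vector_derivative_works by blast
  obtain Fd where Fd: "((\<lambda>t. F t x) has_vector_derivative Fd) (at 0)"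
    using Fdiff vector_derivative_works by blast
  have ydiff: "(\<lambda>t. y t $ i) differentiable (at 0)" for i
  proof -
    have "((\<lambda>t. F t x $ i) has_vector_derivative Fd $ i) (at 0)"
      using bounded_linear.has_vector_derivative[OF bounded_linear_vec_nth Fd] .
    from bounded_bilinear.has_vector_derivative[OF bb_mv Qd this]
    have "((\<lambda>t. Q t *v (F t x $ i)) has_vector_derivative (Q 0 *v (Fd $ i) + Qd *v (F 0 x $ i))) (at 0)"
      by simp
    from has_vector_derivative_add[OF this bd]
    show ?thesis unfolding y_def se3_nth by (rule differentiableI_vector)
  qed
  define yd where "yd i = vector_derivative (\<lambda>t. y t $ i) (at 0)" for i
  have yd: "((\<lambda>t. y t $ i) has_vector_derivative yd i) (at 0)" for i
    unfolding yd_def using ydiff[of i] by (simp add: vector_derivative_works[symmetric])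
  have sumyd: "(\<Sum>i\<in>UNIV. yd i) = 0"
  proof -
    have "((\<lambda>t. \<Sum>i\<in>UNIV. y t $ i) has_vector_derivative (\<Sum>i\<in>UNIV. yd i)) (at 0)"
      by (rule has_vector_derivative_sum) (use yd in blast)
    moreover have "(\<lambda>t. \<Sum>i\<in>UNIV. y t $ i) = (\<lambda>t. \<Sum>i\<in>UNIV. x $ i)" by (simp add: sumeq)
    ultimately show ?thesis using vector_derivative_unique_at has_vector_derivative_const by metis
  qed
  have crossyd: "(\<Sum>i\<in>UNIV. cross3 (yd i) (x$i)) = 0"
  proof -
    have "((\<lambda>t. \<Sum>i\<in>UNIV. cross3 (y t $ i) (x$i)) has_vector_derivative (\<Sum>i\<in>UNIV. cross3 (yd i) (x$i))) (at 0)"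
    proof (rule has_vector_derivative_sum)
      fix i
      show "((\<lambda>t. cross3 (y t $ i) (x$i)) has_vector_derivative cross3 (yd i) (x$i)) (at 0)"
        using bounded_bilinear.has_vector_derivative[OF bb_cross yd[of i] has_vector_derivative_const[of "x$i"]]
        by simp
    qed
    moreover have "(\<lambda>t. \<Sum>i\<in>UNIV. cross3 (y t $ i) (x$i)) = (\<lambda>t. 0)" by (simp add: crosseq)
    ultimately show ?thesis using vector_derivative_unique_at has_vector_derivative_const by metis
  qed
  have "(\<Sum>i\<in>UNIV. cross3 (x $ i - centroid x) (yd i))
      = (\<Sum>i\<in>UNIV. cross3 (x $ i) (yd i)) - cross3 (centroid x) (\<Sum>i\<in>UNIV. yd i)"
    by (simp add: bounded_bilinear.diff_left[OF bb_cross] bounded_bilinear.sum_right[OF bb_cross] sum_subtractf)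
  also have "\<dots> = - (\<Sum>i\<in>UNIV. cross3 (yd i) (x $ i))"
    using sumyd by (subst cross_skew) (simp add: sum_negf)
  also have "\<dots> = 0" using crossyd by simp
  finally have part2: "(\<Sum>i\<in>UNIV. cross3 (x $ i - centroid x) (yd i)) = 0" .
  show ?thesis using part1 part2 unfolding y_def yd_def by simp
qed

end
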